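(* For a permutation class $\mathcal{C}$ the following are equivalent: (a) $\mathcal{C}$ has unbounded horizontal path-width; (b) $\mathcal{C}$ contains horizontal alternations of arbitrarily large length; (c) $\mathcal{C}$ contains a horizontal monotone juxtaposition as a subclass.
   Context: Permutations of length $n$ are identified with their diagrams $\{(i,\pi_i)\}$; a permutation class is a set of permutations closed under containment (pattern containment: some subsequence in the same relative order). Intervalicity of $A\subseteq[n]$ is the least number of disjoint integer intervals with union $A$; the grid-complexity of a point set is the maximum of the intervalicities of its projections onto the two axes. The horizontal path-width of $\pi$ is the maximum over $i\in[n]$ of the grid-complexity of $\{(1,\pi_1),\dots,(i,\pi_i)\}$; a class has unbounded horizontal path-width if these values are unbounded over its members. A permutation $\pi$ is a horizontal alternation if there are no indices $i<j$ with $\pi_i$ odd and $\pi_j$ even (all even entries precede all odd entries). $\mathrm{Inc}$, $\mathrm{Dec}$ are the classes of increasing and decreasing permutations. A horizontal monotone juxtaposition is a grid class $\mathrm{Grid}(\mathcal{C}_1\ \mathcal{C}_2)$ of a $2\times1$ gridding matrix with $\mathcal{C}_1,\mathcal{C}_2\in\{\mathrm{Inc},\mathrm{Dec}\}$, i.e., the class of permutations $\pi$ of length $n$ for which there is $m\in\{0,\dots,n\}$ such that $\pi_1,\dots,\pi_m$ is a pattern in $\mathcal{C}_1$ and $\pi_{m+1},\dots,\pi_n$ is a pattern in $\mathcal{C}_2$. *)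

theory Defs
  imports Main
begin

(* A permutation of length n is a list of the values 1..n, each exactly once;
   entry pi!(i-1) is pi_i (positions are 1-based in the paper). *)
definition is_perm :: "nat list \<Rightarrow> bool" where
  "is_perm p \<longleftrightarrow> distinct p \<and> set p = {1..length p}"

definition contains :: "nat list \<Rightarrow> nat list \<Rightarrow> bool" where
  "contains p s \<longleftrightarrow> (\<exists>f :: nat \<Rightarrow> nat.
      (\<forall>i j. i < j \<and> j < length s \<longrightarrow> f i < f j) \<and>
      (\<forall>i < length s. f i < length p) \<and>
      (\<forall>i < length s. \<forall>j < length s. (p ! f i < p ! f j \<longleftrightarrow> s ! i < s ! j)))"

definition perm_class :: "nat list set \<Rightarrow> bool" where
  "perm_class C \<longleftrightarrow> (\<forall>p \<in> C. is_perm p) \<and>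
     (\<forall>p \<in> C. \<forall>s. is_perm s \<and> contains p s \<longrightarrow> s \<in> C)"

definition intervalicity :: "nat set \<Rightarrow> nat" where
  "intervalicity A = (LEAST k. \<exists>I :: nat \<Rightarrow> nat \<times> nat.
      (\<Union>i<k. {fst (I i)..snd (I i)}) = A \<and>
      (\<forall>i<k. \<forall>j<k. i \<noteq> j \<longrightarrow> {fst (I i)..snd (I i)} \<inter> {fst (I j)..snd (I j)} = {}))"

definition grid_complexity :: "(nat \<times> nat) set \<Rightarrow> nat" where
  "grid_complexity P = max (intervalicity (fst ` P)) (intervalicity (snd ` P))"

definition prefix_points :: "nat list \<Rightarrow> nat \<Rightarrow> (nat \<times> nat) set" where
  "prefix_points p i = {(j, p ! (j - 1)) | j. 1 \<le> j \<and> j \<le> i}"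

definition hpw :: "nat list \<Rightarrow> nat" where
  "hpw p = Max (insert 0 ((\<lambda>i. grid_complexity (prefix_points p i)) ` {1..length p}))"

definition unbounded_hpw :: "nat list set \<Rightarrow> bool" where
  "unbounded_hpw C \<longleftrightarrow> (\<forall>k. \<exists>p \<in> C. hpw p > k)"

definition horizontal_alternation :: "nat list \<Rightarrow> bool" where
  "horizontal_alternation p \<longleftrightarrow>
     (\<nexists>i j. i < j \<and> j < length p \<and> odd (p ! i) \<and> even (p ! j))"

datatype mono_kind = Inc | Dec

(* a sequence is a pattern in Inc (resp. Dec) iff it is increasing (resp. decreasing) *)
fun mono_seq :: "mono_kind \<Rightarrow> nat list \<Rightarrow> bool" where
  "mono_seq Inc xs = sorted_wrt (<) xs"
| "mono_seq Dec xs = sorted_wrt (>) xs"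

definition juxtaposition :: "mono_kind \<Rightarrow> mono_kind \<Rightarrow> nat list set" where
  "juxtaposition c1 c2 = {p. is_perm p \<and>
      (\<exists>m \<le> length p. mono_seq c1 (take m p) \<and> mono_seq c2 (drop m p))}"

end

theory Submission
  imports Defs
begin

definition rs :: "nat set \<Rightarrow> nat set" where
  "rs V = {v\<in>V. v = 0 \<or> v - 1 \<notin> V}"

lemma runs_witness:
  assumes fin: "finite V"
  shows "\<exists>I :: nat \<Rightarrow> nat \<times> nat. (\<Union>i<card (rs V). {fst (I i)..snd (I i)}) = V \<and>
      (\<forall>i<card (rs V). \<forall>j<card (rs V). i \<noteq> j \<longrightarrow> {fst (I i)..snd (I i)} \<inter> {fst (I j)..snd (I j)} = {})"
proof -
  define e where "e a = (LEAST e. a \<le> e \<and> Suc e \<notin> V)" for a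
  have ex: "\<exists>e. a \<le> e \<and> Suc e \<notin> V" for a
  proof -
    obtain B where B: "\<forall>v\<in>V. v < B" using fin finite_nat_set_iff_bounded by blast
    show ?thesis by (rule exI[of _ "a + B"]) (use B in auto)
  qed
  have P1: "a \<le> e a \<and> Suc (e a) \<notin> V" for a
    unfolding e_def by (rule LeastI_ex[OF ex])
  have P2: "a \<le> x \<Longrightarrow> x < e a \<Longrightarrow> Suc x \<in> V" for a x
    using not_less_Least[of x "\<lambda>e. a \<le> e \<and> Suc e \<notin> V"] unfolding e_def by auto
  have sub: "a \<in> V \<Longrightarrow> a \<le> x \<Longrightarrow> x \<le> e a \<Longrightarrow> x \<in> V" for a x
  proof (induction x)
    case 0 then show ?case by simp
  next
    case (Suc x)
    show ?case
    proof (cases "a \<le> x")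
      case True
      then show ?thesis using Suc P2[of a x] by auto
    next
      case False
      then have "a = Suc x" using Suc by auto
      then show ?thesis using Suc by simp
    qed
  qed
  have cover: "v \<in> V \<Longrightarrow> \<exists>a\<in>rs V. a \<le> v \<and> v \<le> e a" for v
  proof (induction v)
    case 0 then show ?case using P1[of 0] unfolding rs_def by auto
  next
    case (Suc w)
    show ?case
    proof (cases "w \<in> V")
      case False
      then show ?thesis using Suc P1[of "Suc w"] unfolding rs_def by auto
    next
      case True
      then obtain a where a: "a \<in> rs V" "a \<le> w" "w \<le> e a" using Suc by auto
      have "w \<noteq> e a" using P1[of a] Suc by auto
      then show ?thesis using a by (intro bexI[of _ a]) auto
    qed
  qed
  have disj: "a \<in> rs V \<Longrightarrow> a' \<in> rs V \<Longrightarrow> a < a' \<Longrightarrow> {a..e a} \<inter> {a'..e a'} = {}" for a a'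
  proof (rule ccontr)
    assume a: "a \<in> rs V" "a' \<in> rs V" "a < a'" "{a..e a} \<inter> {a'..e a'} \<noteq> {}"
    then obtain x where x: "a' \<le> x" "x \<le> e a" by auto
    have "a' - 1 \<in> V" using sub[of a "a' - 1"] a x unfolding rs_def by auto
    then show False using a unfolding rs_def by auto
  qed
  have finrs: "finite (rs V)" using fin unfolding rs_def by auto
  obtain h where h: "bij_betw h {0..<card (rs V)} (rs V)"
    using ex_bij_betw_nat_finite[OF finrs] by blast
  define I where "I i = (h i, e (h i))" for i
  have hin: "i < card (rs V) \<Longrightarrow> h i \<in> rs V" for i using h bij_betwE by fastforce
  have U: "(\<Union>i<card (rs V). {fst (I i)..snd (I i)}) = V"
  proof
    show "(\<Union>i<card (rs V). {fst (I i)..snd (I i)}) \<subseteq> V"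
      using sub hin unfolding I_def rs_def by (auto simp del: One_nat_def) (meson sub)
  next
    show "V \<subseteq> (\<Union>i<card (rs V). {fst (I i)..snd (I i)})"
    proof
      fix v assume "v \<in> V"
      then obtain a where a: "a \<in> rs V" "a \<le> v" "v \<le> e a" using cover by blast
      then obtain i where "i < card (rs V)" "h i = a"
        using h unfolding bij_betw_def by (metis atLeast0LessThan imageE lessThan_iff)
      then show "v \<in> (\<Union>i<card (rs V). {fst (I i)..snd (I i)})" using a unfolding I_def by auto
    qed
  qed
  have D: "\<forall>i<card (rs V). \<forall>j<card (rs V). i \<noteq> j \<longrightarrow> {fst (I i)..snd (I i)} \<inter> {fst (I j)..snd (I j)} = {}"
  proof (intro allI impI)
    fix i j assume ij: "i < card (rs V)" "j < card (rs V)" "i \<noteq> j"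
    then have "h i \<noteq> h j" using h unfolding bij_betw_def inj_on_def by auto
    then show "{fst (I i)..snd (I i)} \<inter> {fst (I j)..snd (I j)} = {}"
      using disj[of "h i" "h j"] disj[of "h j" "h i"] hin ij unfolding I_def
      by (cases "h i < h j") (auto simp: Int_commute)
  qed
  show ?thesis using U D by blast
qed

lemma intervalicity_le: "finite V \<Longrightarrow> intervalicity V \<le> card (rs V)"
  unfolding intervalicity_def by (rule Least_le) (rule runs_witness)

lemma intervalicity_ge:
  assumes "finite V" "\<forall>v\<in>V. Suc v \<notin> V"
  shows "card V \<le> intervalicity V"
proof -
  let ?P = "\<lambda>k. \<exists>I :: nat \<Rightarrow> nat \<times> nat.
      (\<Union>i<k. {fst (I i)..snd (I i)}) = V \<and>
      (\<forall>i<k. \<forall>j<k. i \<noteq> j \<longrightarrow> {fst (I i)..snd (I i)} \<inter> {fst (I j)..snd (I j)} = {})"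
  have "?P (intervalicity V)"
    unfolding intervalicity_def by (rule LeastI_ex) (use runs_witness[OF assms(1)] in blast)
  then obtain I where I: "(\<Union>i<intervalicity V. {fst (I i)..snd (I i)}) = V" by blast
  have c1: "card {fst (I i)..snd (I i)} \<le> 1" if "i < intervalicity V" for i
  proof (rule ccontr)
    assume "\<not> ?thesis"
    then have "fst (I i) < snd (I i)" by auto
    moreover have "{fst (I i)..snd (I i)} \<subseteq> V" using I that by blast
    ultimately have "fst (I i) \<in> V" "Suc (fst (I i)) \<in> V" by auto
    then show False using assms(2) by auto
  qed
  have "card V \<le> (\<Sum>i<intervalicity V. card {fst (I i)..snd (I i)})"
    using card_UN_le[of "{..<intervalicity V}" "\<lambda>i. {fst (I i)..snd (I i)}"] I by simp
  also have "\<dots> \<le> (\<Sum>i<intervalicity V. 1)" by (rule sum_mono) (use c1 in auto)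
  finally show ?thesis by simp
qed


fun mdir :: "mono_kind \<Rightarrow> (nat \<Rightarrow> nat) \<Rightarrow> nat set \<Rightarrow> bool" where
  "mdir Inc g A = (\<forall>u\<in>A. \<forall>w\<in>A. u < w \<longrightarrow> g u < g w)"
| "mdir Dec g A = (\<forall>u\<in>A. \<forall>w\<in>A. u < w \<longrightarrow> g w < g u)"

lemma mdir_mono: "mdir c g A \<Longrightarrow> B \<subseteq> A \<Longrightarrow> mdir c g B"
  by (cases c) auto

lemma es_aux:
  "finite S \<Longrightarrow> inj_on g S \<Longrightarrow> 2^(a+b) \<le> card S \<Longrightarrow>
    (\<exists>T\<subseteq>S. a \<le> card T \<and> mdir Inc g T) \<or> (\<exists>T\<subseteq>S. b \<le> card T \<and> mdir Dec g T)"
proof (induction "a+b" arbitrary: a b S)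
  case 0
  then show ?case by (intro disjI1 exI[of _ "{}"]) auto
next
  case (Suc n)
  show ?case
  proof (cases "a = 0 \<or> b = 0")
    case True
    show ?thesis
    proof (cases "a = 0")
      case True then show ?thesis by (intro disjI1 exI[of _ "{}"]) auto
    next
      case False then have "b = 0" using \<open>a = 0 \<or> b = 0\<close> by simp
      then show ?thesis by (intro disjI2 exI[of _ "{}"]) auto
    qed
  next
    case False
    have "S \<noteq> {}" using Suc.prems by auto
    define s0 where "s0 = Min S"
    have s0: "s0 \<in> S" "\<forall>s\<in>S. s0 \<le> s" using Suc.prems \<open>S \<noteq> {}\<close> unfolding s0_def by auto
    define S1 where "S1 = {s \<in> S - {s0}. g s0 < g s}"
    define S2 where "S2 = {s \<in> S - {s0}. g s < g s0}"
    have un: "S - {s0} = S1 \<union> S2"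
      using Suc.prems(2) s0 unfolding S1_def S2_def inj_on_def by (auto, metis linorder_neqE_nat)
    have dj: "S1 \<inter> S2 = {}" unfolding S1_def S2_def by auto
    have fin1: "finite S1" "finite S2" using Suc.prems(1) unfolding S1_def S2_def by auto
    have "card S1 + card S2 = card S - 1"
      using card_Un_disjoint[OF fin1 dj] un s0 Suc.prems(1) card_Diff_singleton[of s0 S] by simp
    moreover have "(2::nat)^(a+b) = 2 * 2^n" using Suc.hyps(2) by (metis power_Suc)
    ultimately have dis: "2^n \<le> card S1 \<or> 2^n \<le> card S2" using Suc.prems(3) by linarith
    have sub1: "S1 \<subseteq> S" "S2 \<subseteq> S" unfolding S1_def S2_def by auto
    have inj1: "inj_on g S1" "inj_on g S2" using inj_on_subset[OF Suc.prems(2)] sub1 by auto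
    from dis show ?thesis
    proof
      assume c1: "2^n \<le> card S1"
      have h: "n = (a - 1) + b" using False Suc.hyps(2) by auto
      from Suc.hyps(1)[OF h fin1(1) inj1(1) c1[unfolded h]]
      have "(\<exists>T\<subseteq>S1. a - 1 \<le> card T \<and> mdir Inc g T) \<or> (\<exists>T\<subseteq>S1. b \<le> card T \<and> mdir Dec g T)"
 .
      then show ?thesis
      proof
        assume "\<exists>T\<subseteq>S1. a - 1 \<le> card T \<and> mdir Inc g T"
        then obtain T where T: "T \<subseteq> S1" "a - 1 \<le> card T" "mdir Inc g T" by blast
        have fT: "finite T" using T(1) fin1 finite_subset by blast
        have "s0 \<notin> T" using T(1) unfolding S1_def by auto
        then have "card (insert s0 T) = Suc (card T)" using fT by simp
        then have "a \<le> card (insert s0 T)" using T(2) by linarith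
        moreover have "insert s0 T \<subseteq> S" using T(1) s0 unfolding S1_def by auto
        moreover have "mdir Inc g (insert s0 T)"
        proof -
          have "\<forall>t\<in>T. s0 < t \<and> g s0 < g t" using T(1) s0 unfolding S1_def by force
          then show ?thesis using T(3) by auto
        qed
        ultimately have "insert s0 T \<subseteq> S \<and> a \<le> card (insert s0 T) \<and> mdir Inc g (insert s0 T)" by blast
        then have "\<exists>T'. T' \<subseteq> S \<and> a \<le> card T' \<and> mdir Inc g T'"
          by (rule exI[where P="\<lambda>T'. T' \<subseteq> S \<and> a \<le> card T' \<and> mdir Inc g T'"])
        then show ?thesis by (rule disjI1)
      next
        assume "\<exists>T\<subseteq>S1. b \<le> card T \<and> mdir Dec g T"
        then obtain T where T: "T \<subseteq> S1" "b \<le> card T" "mdir Dec g T" by blast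
        have "T \<subseteq> S" using T(1) sub1 by blast
        with T have "\<exists>T'. T' \<subseteq> S \<and> b \<le> card T' \<and> mdir Dec g T'"
          by (intro exI[where x=T]) simp
        then show ?thesis by (rule disjI2)
      qed
    next
      assume c2: "2^n \<le> card S2"
      have h: "n = a + (b - 1)" using False Suc.hyps(2) by auto
      from Suc.hyps(1)[OF h fin1(2) inj1(2) c2[unfolded h]]
      have "(\<exists>T\<subseteq>S2. a \<le> card T \<and> mdir Inc g T) \<or> (\<exists>T\<subseteq>S2. b - 1 \<le> card T \<and> mdir Dec g T)"
 .
      then show ?thesis
      proof
        assume "\<exists>T\<subseteq>S2. b - 1 \<le> card T \<and> mdir Dec g T"
        then obtain T where T: "T \<subseteq> S2" "b - 1 \<le> card T" "mdir Dec g T" by blast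
        have fT: "finite T" using T(1) fin1 finite_subset by blast
        have "s0 \<notin> T" using T(1) unfolding S2_def by auto
        then have "card (insert s0 T) = Suc (card T)" using fT by simp
        then have "b \<le> card (insert s0 T)" using T(2) by linarith
        moreover have "insert s0 T \<subseteq> S" using T(1) s0 unfolding S2_def by auto
        moreover have "mdir Dec g (insert s0 T)"
        proof -
          have "\<forall>t\<in>T. s0 < t \<and> g t < g s0" using T(1) s0 unfolding S2_def by force
          then show ?thesis using T(3) by auto
        qed
        ultimately have "insert s0 T \<subseteq> S \<and> b \<le> card (insert s0 T) \<and> mdir Dec g (insert s0 T)" by blast
        then have "\<exists>T'. T' \<subseteq> S \<and> b \<le> card T' \<and> mdir Dec g T'"
          by (rule exI[where P="\<lambda>T'. T' \<subseteq> S \<and> b \<le> card T' \<and> mdir Dec g T'"])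
        then show ?thesis by (rule disjI2)
      next
        assume "\<exists>T\<subseteq>S2. a \<le> card T \<and> mdir Inc g T"
        then obtain T where T: "T \<subseteq> S2" "a \<le> card T" "mdir Inc g T" by blast
        have "T \<subseteq> S" using T(1) sub1 by blast
        with T have "\<exists>T'. T' \<subseteq> S \<and> a \<le> card T' \<and> mdir Inc g T'"
          by (intro exI[where x=T]) simp
        then show ?thesis by (rule disjI1)
      qed
    qed
  qed
qed

lemma es: "finite S \<Longrightarrow> inj_on g S \<Longrightarrow> 4^m \<le> card S \<Longrightarrow> \<exists>c T. T \<subseteq> S \<and> m \<le> card T \<and> mdir c g T"
proof -
  assume a: "finite S" "inj_on g S" "4^m \<le> card S"
  have "(4::nat)^m = 2^(m+m)" by (simp add: power_add flip: power_mult_distrib)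
  then have "(\<exists>T\<subseteq>S. m \<le> card T \<and> mdir Inc g T) \<or> (\<exists>T\<subseteq>S. m \<le> card T \<and> mdir Dec g T)"
    using es_aux[of S g m m] a by (simp del: mdir.simps)
  then show ?thesis
  proof
    assume "\<exists>T\<subseteq>S. m \<le> card T \<and> mdir Inc g T"
    then obtain T where "T \<subseteq> S" "m \<le> card T" "mdir Inc g T" by blast
    then show ?thesis by (intro exI[where x=Inc] exI[where x=T]) (simp del: mdir.simps)
  next
    assume "\<exists>T\<subseteq>S. m \<le> card T \<and> mdir Dec g T"
    then obtain T where "T \<subseteq> S" "m \<le> card T" "mdir Dec g T" by blast
    then show ?thesis by (intro exI[where x=Dec] exI[where x=T]) (simp del: mdir.simps)
  qed
qed


lemma mono_nth:
  assumes "mono_seq c xs" "mdir c g A" "set xs \<subseteq> A" "i < j" "j < length xs"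
  shows "g (xs ! i) < g (xs ! j)"
proof (cases c)
  case Inc
  then have "xs ! i < xs ! j" using assms(1,4,5) by (simp add: sorted_wrt_iff_nth_less)
  then show ?thesis using assms(2,3,4,5) Inc by (simp, meson nth_mem order.strict_trans subsetD)
next
  case Dec
  then have "xs ! j < xs ! i" using assms(1,4,5) by (simp add: sorted_wrt_iff_nth_less)
  then show ?thesis using assms(2,3,4,5) Dec by (simp, meson nth_mem order.strict_trans subsetD)
qed

lemma embed:
  fixes Lp Rp :: "nat \<Rightarrow> nat" and p q :: "nat list"
  assumes len: "\<forall>u\<in>{1..m}. Lp u < length p \<and> Rp u < length p"
  and LR: "\<forall>u\<in>{1..m}. \<forall>w\<in>{1..m}. Lp u < Rp w"
  and ord: "\<forall>u\<in>{1..m}. \<forall>w\<in>{1..m}. u < w \<longrightarrow>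
      (\<forall>x y. p ! (if x then Lp u else Rp u) < p ! (if y then Lp w else Rp w))"
  and d1: "mdir c1 Lp {1..m}" and d2: "mdir c2 Rp {1..m}"
  and q: "q \<in> juxtaposition c1 c2" and ql: "length q \<le> m"
  shows "contains p q"
proof -
  from q obtain k where k: "is_perm q" "k \<le> length q" "mono_seq c1 (take k q)" "mono_seq c2 (drop k q)"
    unfolding juxtaposition_def by blast
  have dq: "distinct q" and sq: "set q = {1..length q}" using k(1) unfolding is_perm_def by auto
  have qv: "t < length q \<Longrightarrow> q ! t \<in> {1..m}" for t using sq ql nth_mem[of t q] by auto
  define f where "f t = (if t < k then Lp (q ! t) else Rp (q ! t))" for t
  have sub: "set xs \<subseteq> {1..m}" if "xs = take k q \<or> xs = drop k q" for xs
    using that sq ql by (auto dest: in_set_takeD in_set_dropD)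
  have mono: "f t < f t'" if "t < t'" "t' < length q" for t t'
  proof (cases "t' < k")
    case True
    then have "Lp (take k q ! t) < Lp (take k q ! t')"
      using mono_nth[OF k(3) d1 sub[of "take k q"]] that k(2) by simp
    then show ?thesis using True that unfolding f_def by simp
  next
    case False
    show ?thesis
    proof (cases "t < k")
      case True
      then show ?thesis using False that LR qv unfolding f_def by simp
    next
      case F2: False
      have "Rp (drop k q ! (t - k)) < Rp (drop k q ! (t' - k))"
        using mono_nth[OF k(4) d2 sub[of "drop k q"], of "t - k" "t' - k"] that F2 k(2) by simp
      then show ?thesis using False F2 that unfolding f_def by simp
    qed
  qed
  have pv: "p ! f t = p ! (if t < k then Lp (q ! t) else Rp (q ! t))" for t unfolding f_def by simp
  have val: "(p ! f t < p ! f t') = (q ! t < q ! t')" if "t < length q" "t' < length q" for t t'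
  proof -
    consider "q ! t < q ! t'" | "q ! t' < q ! t" | "q ! t = q ! t'" by linarith
    then show ?thesis
    proof cases
      case 1 then show ?thesis using ord qv that unfolding pv by blast
    next
      case 2 then have "p ! f t' < p ! f t" using ord qv that unfolding pv by blast
      then show ?thesis using 2 by simp
    next
      case 3 then have "t = t'" using dq that nth_eq_iff_index_eq by blast
      then show ?thesis by simp
    qed
  qed
  have "f t < length p" if "t < length q" for t using len qv[OF that] unfolding f_def by auto
  then show ?thesis unfolding contains_def using mono val by blast
qed

lemma struct_juxt:
  fixes L R :: "nat \<Rightarrow> nat" and p :: "nat list" and S :: "nat set"
  assumes fin: "finite S" and cardS: "4^(4^m) \<le> card S"
  and injL: "inj_on L S" and injR: "inj_on R S"
  and len: "\<forall>s\<in>S. L s < length p \<and> R s < length p"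
  and LR: "\<forall>s\<in>S. \<forall>s'\<in>S. L s < R s'"
  and ord: "\<forall>s\<in>S. \<forall>s'\<in>S. s < s' \<longrightarrow>
      (\<forall>x y. p ! (if x then L s else R s) < p ! (if y then L s' else R s'))"
  shows "\<exists>c1 c2. \<forall>q \<in> juxtaposition c1 c2. length q \<le> m \<longrightarrow> contains p q"
proof -
  obtain c1 T1 where T1: "T1 \<subseteq> S" "4^m \<le> card T1" "mdir c1 L T1"
    using es[OF fin injL cardS] by blast
  have fT1: "finite T1" using T1(1) fin finite_subset by blast
  obtain c2 T2 where T2: "T2 \<subseteq> T1" "m \<le> card T2" "mdir c2 R T2"
    using es[OF fT1 inj_on_subset[OF injR T1(1)] T1(2)] by blast
  have fT2: "finite T2" using T2(1) fT1 finite_subset by blast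
  have m1: "mdir c1 L T2" using mdir_mono[OF T1(3) T2(1)] .
  define xs where "xs = sorted_list_of_set T2"
  have xs: "sorted_wrt (<) xs" "set xs = T2" "length xs = card T2"
    using fT2 unfolding xs_def by auto
  define e where "e u = xs ! (u - 1)" for u
  have ein: "u \<in> {1..m} \<Longrightarrow> e u \<in> T2" for u
    using xs T2(2) unfolding e_def by (metis atLeastAtMost_iff diff_less le_trans less_le_trans nth_mem zero_less_one less_le_not_le not_le)
  have emono: "u \<in> {1..m} \<Longrightarrow> w \<in> {1..m} \<Longrightarrow> u < w \<Longrightarrow> e u < e w" for u w
    using xs T2(2) unfolding e_def sorted_wrt_iff_nth_less
    by (metis atLeastAtMost_iff diff_less_mono le_trans less_le_trans not_le zero_less_one diff_less le_simps(3))
  have eS: "u \<in> {1..m} \<Longrightarrow> e u \<in> S" for u using ein T1(1) T2(1) by blast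
  have d1: "mdir c1 (L \<circ> e) {1..m}"
    using m1 ein emono by (cases c1) auto
  have d2: "mdir c2 (R \<circ> e) {1..m}"
    using T2(3) ein emono by (cases c2) auto
  have "\<forall>q \<in> juxtaposition c1 c2. length q \<le> m \<longrightarrow> contains p q"
  proof (intro ballI impI)
    fix q assume q: "q \<in> juxtaposition c1 c2" "length q \<le> m"
    show "contains p q"
    proof (rule embed[of m "L \<circ> e" p "R \<circ> e" c1 c2 q])
      show "\<forall>u\<in>{1..m}. (L \<circ> e) u < length p \<and> (R \<circ> e) u < length p" using len eS by auto
      show "\<forall>u\<in>{1..m}. \<forall>w\<in>{1..m}. (L \<circ> e) u < (R \<circ> e) w" using LR eS by auto
      show "\<forall>u\<in>{1..m}. \<forall>w\<in>{1..m}. u < w \<longrightarrow>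
        (\<forall>x y. p ! (if x then (L \<circ> e) u else (R \<circ> e) u) < p ! (if y then (L \<circ> e) w else (R \<circ> e) w))"
      proof (intro ballI impI allI)
        fix u w x y assume uw: "u \<in> {1..m}" "w \<in> {1..m}" "u < w"
        then have "e u \<in> S" "e w \<in> S" "e u < e w" using eS emono by auto
        then have "p ! (if x then L (e u) else R (e u)) < p ! (if y then L (e w) else R (e w))"
          using ord by blast
        then show "p ! (if x then (L \<circ> e) u else (R \<circ> e) u) < p ! (if y then (L \<circ> e) w else (R \<circ> e) w)"
          by (simp only: comp_def)
      qed
    qed (use d1 d2 q in auto)
  qed
  then show ?thesis by blast
qed


definition pos :: "nat list \<Rightarrow> nat \<Rightarrow> nat" where
  "pos p x = (SOME j. j < length p \<and> p ! j = x)"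

lemma pos: assumes "is_perm p" "1 \<le> x" "x \<le> length p"
  shows "pos p x < length p \<and> p ! pos p x = x"
proof -
  have "x \<in> set p" using assms unfolding is_perm_def by auto
  then have "\<exists>j. j < length p \<and> p ! j = x" by (simp add: in_set_conv_nth)
  then show ?thesis unfolding pos_def by (rule someI_ex)
qed

lemma pos_unique: assumes "is_perm p" "j < length p" "p ! j = x" shows "pos p x = j"
proof -
  have "x \<in> set p" using assms by auto
  then have x: "1 \<le> x" "x \<le> length p" using assms unfolding is_perm_def by auto
  have d: "distinct p" using assms unfolding is_perm_def by auto
  show ?thesis using pos[OF assms(1) x] assms d nth_eq_iff_index_eq by metis
qed

lemma class_closed: "perm_class C \<Longrightarrow> p \<in> C \<Longrightarrow> is_perm q \<Longrightarrow> contains p q \<Longrightarrow> q \<in> C"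
  unfolding perm_class_def by blast

lemma snd_prefix: "i \<le> length p \<Longrightarrow> snd ` prefix_points p i = set (take i p)"
proof
  assume i: "i \<le> length p"
  show "snd ` prefix_points p i \<subseteq> set (take i p)"
  proof
    fix x assume "x \<in> snd ` prefix_points p i"
    then obtain j where j: "1 \<le> j" "j \<le> i" "x = p ! (j - 1)" unfolding prefix_points_def by auto
    then have "take i p ! (j - 1) = x" "j - 1 < length (take i p)" using i by auto
    then show "x \<in> set (take i p)" by (metis nth_mem)
  qed
next
  assume i: "i \<le> length p"
  show "set (take i p) \<subseteq> snd ` prefix_points p i"
  proof
    fix x assume "x \<in> set (take i p)"
    then obtain j where j: "j < i" "x = p ! j" using i by (auto simp: in_set_conv_nth)
    then have "(Suc j, x) \<in> prefix_points p i" unfolding prefix_points_def by force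
    then show "x \<in> snd ` prefix_points p i" by force
  qed
qed

lemma fst_prefix: "fst ` prefix_points p i = {1..i}"
  unfolding prefix_points_def by force

lemma intervalicity_interval: "intervalicity {1..i} \<le> 1"
  unfolding intervalicity_def by (rule Least_le) (rule exI[of _ "\<lambda>_. (1, i)"], auto)

lemma hpw_ge: "1 \<le> i \<Longrightarrow> i \<le> length p \<Longrightarrow> grid_complexity (prefix_points p i) \<le> hpw p"
  unfolding hpw_def by (rule Max_ge) auto

lemma hpw_obtain: assumes "k < hpw p"
  shows "\<exists>i\<in>{1..length p}. k < grid_complexity (prefix_points p i)"
proof -
  have "k < Max (insert 0 ((\<lambda>i. grid_complexity (prefix_points p i)) ` {1..length p}))"
    using assms unfolding hpw_def .
  then show ?thesis by (subst (asm) Max_gr_iff) auto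
qed


lemma pigeon:
  assumes "\<forall>m. \<exists>c1 c2. \<forall>q\<in>juxtaposition c1 c2. length q \<le> m \<longrightarrow> q \<in> C"
  shows "\<exists>c1 c2. juxtaposition c1 c2 \<subseteq> C"
proof (rule ccontr)
  assume "\<not> ?thesis"
  then have ex: "\<exists>q. q \<in> juxtaposition c1 c2 \<and> q \<notin> C" for c1 c2 by blast
  define qf where "qf c1 c2 = (SOME q. q \<in> juxtaposition c1 c2 \<and> q \<notin> C)" for c1 c2
  have qf: "qf c1 c2 \<in> juxtaposition c1 c2 \<and> qf c1 c2 \<notin> C" for c1 c2
    unfolding qf_def by (rule someI_ex[OF ex])
  define M where "M = length (qf Inc Inc) + length (qf Inc Dec) + length (qf Dec Inc) + length (qf Dec Dec)"
  obtain c1 c2 where c: "\<forall>q\<in>juxtaposition c1 c2. length q \<le> M \<longrightarrow> q \<in> C" using assms by blast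
  have "length (qf c1 c2) \<le> M" unfolding M_def by (cases c1; cases c2) auto
  then show False using c qf by blast
qed

lemma a_to_good:
  assumes C: "perm_class C" and a: "unbounded_hpw C"
  shows "\<exists>c1 c2. \<forall>q\<in>juxtaposition c1 c2. length q \<le> m \<longrightarrow> q \<in> C"
proof -
  define K where "K = 4^(4^m) + (1::nat)"
  obtain p where p: "p \<in> C" "K < hpw p" using a unfolding unbounded_hpw_def by blast
  have pp: "is_perm p" using p C unfolding perm_class_def by blast
  have dp: "distinct p" and sp: "set p = {1..length p}" using pp unfolding is_perm_def by auto
  obtain i where i: "i \<in> {1..length p}" "K < grid_complexity (prefix_points p i)"
    using hpw_obtain[OF p(2)] by blast
  define V where "V = set (take i p)"
  have "K \<ge> 1" unfolding K_def by simp
  then have "K < intervalicity V"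
    using i intervalicity_interval[of i] unfolding grid_complexity_def V_def
    by (simp add: snd_prefix fst_prefix)
  moreover have "intervalicity V \<le> card (rs V)" using intervalicity_le V_def by auto
  ultimately have K1: "K < card (rs V)" by linarith
  define S where "S = {v \<in> V. 2 \<le> v \<and> v - 1 \<notin> V}"
  have Vsub: "V \<subseteq> {1..length p}" unfolding V_def using sp set_take_subset by metis
  have "rs V \<subseteq> insert 1 S" using Vsub unfolding rs_def S_def by auto
  moreover have finS: "finite S" unfolding S_def V_def by auto
  ultimately have "card (rs V) \<le> card (insert 1 S)" by (intro card_mono) auto
  also have "\<dots> \<le> Suc (card S)" using finS by (simp add: card_insert_if)
  finally have "card (rs V) \<le> Suc (card S)" .
  then have cardS: "4^(4^m) \<le> card S" using K1 unfolding K_def by linarith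
  define L where "L v = pos p v" for v
  define R where "R v = pos p (v - 1)" for v
  have Sv: "v \<in> S \<Longrightarrow> 2 \<le> v \<and> v \<le> length p \<and> v \<in> V \<and> v - 1 \<notin> V" for v
    using Vsub unfolding S_def by auto
  have Lp: "v \<in> S \<Longrightarrow> L v < length p \<and> p ! L v = v" for v
  proof -
    assume v: "v \<in> S"
    have "1 \<le> v" "v \<le> length p" using Sv[OF v] by auto
    then show ?thesis using pos[OF pp, of v] unfolding L_def by blast
  qed
  have Rp: "v \<in> S \<Longrightarrow> R v < length p \<and> p ! R v = v - 1" for v
  proof -
    assume v: "v \<in> S"
    have "1 \<le> v - 1" "v - 1 \<le> length p" using Sv[OF v] by auto
    then show ?thesis using pos[OF pp, of "v - 1"] unfolding R_def by blast
  qed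
  have Li: "v \<in> S \<Longrightarrow> L v < i" for v
  proof -
    assume v: "v \<in> S"
    then have "v \<in> set (take i p)" using Sv V_def by auto
    then obtain j where j: "j < i" "j < length p" "p ! j = v" by (auto simp: in_set_conv_nth)
    then show "L v < i" using pos_unique[OF pp j(2,3)] unfolding L_def by simp
  qed
  have Ri: "v \<in> S \<Longrightarrow> i \<le> R v" for v
  proof (rule ccontr)
    assume v: "v \<in> S" "\<not> i \<le> R v"
    then have "take i p ! R v = v - 1" "R v < length (take i p)" using Rp[OF v(1)] by auto
    then have "v - 1 \<in> V" unfolding V_def by (metis nth_mem)
    then show False using Sv v by blast
  qed
  have injL: "inj_on L S" using Lp by (metis inj_onI)
  have injR: "inj_on R S" unfolding inj_on_def
  proof (intro ballI impI)
    fix x y assume "x \<in> S" "y \<in> S" "R x = R y"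
    then have "x - 1 = y - 1" using Rp by metis
    then show "x = y" using Sv \<open>x \<in> S\<close> \<open>y \<in> S\<close> by (metis Suc_diff_1 le_trans one_le_numeral Suc_le_eq zero_less_one less_le_trans)
  qed
  have ord: "\<forall>s\<in>S. \<forall>s'\<in>S. s < s' \<longrightarrow>
      (\<forall>x y. p ! (if x then L s else R s) < p ! (if y then L s' else R s'))"
  proof (intro ballI impI allI)
    fix s s' x y assume ss: "s \<in> S" "s' \<in> S" "s < s'"
    have "s \<noteq> s' - 1" using Sv ss by metis
    then have lt: "s < s' - 1" using ss by linarith
    show "p ! (if x then L s else R s) < p ! (if y then L s' else R s')"
      using Lp[OF ss(1)] Lp[OF ss(2)] Rp[OF ss(1)] Rp[OF ss(2)] lt Sv[OF ss(1)]
      by (cases x; cases y) auto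
  qed
  obtain c1 c2 where cc: "\<forall>q\<in>juxtaposition c1 c2. length q \<le> m \<longrightarrow> contains p q"
  proof -
    have len: "\<forall>s\<in>S. L s < length p \<and> R s < length p" using Lp Rp by blast
    have LR: "\<forall>s\<in>S. \<forall>s'\<in>S. L s < R s'" using Li Ri less_le_trans by blast
    show ?thesis using struct_juxt[OF finS cardS injL injR len LR ord] that by blast
  qed
  have "\<forall>q\<in>juxtaposition c1 c2. length q \<le> m \<longrightarrow> q \<in> C"
    using cc class_closed[OF C p(1)] unfolding juxtaposition_def by blast
  then show ?thesis by blast
qed


definition kseq :: "mono_kind \<Rightarrow> nat list \<Rightarrow> nat list" where
  "kseq c xs = (if c = Inc then xs else rev xs)"

lemma kseq_mono: "sorted_wrt (<) xs \<Longrightarrow> mono_seq c (kseq c xs)"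
  unfolding kseq_def by (cases c) (auto simp: sorted_wrt_rev)

lemma kseq_set [simp]: "set (kseq c xs) = set xs" and kseq_len [simp]: "length (kseq c xs) = length xs"
  and kseq_dist [simp]: "distinct (kseq c xs) = distinct xs"
  unfolding kseq_def by auto

lemma c_to_b:
  assumes "juxtaposition c1 c2 \<subseteq> C"
  shows "\<exists>p\<in>C. horizontal_alternation p \<and> length p \<ge> N"
proof -
  define ev where "ev = map (\<lambda>i. 2 * i + 2) [0..<N]"
  define od where "od = map (\<lambda>i. 2 * i + 1) [0..<N]"
  define p where "p = kseq c1 ev @ kseq c2 od"
  have sev: "set ev = {x. even x \<and> 2 \<le> x \<and> x \<le> 2 * N}"
  proof
    show "set ev \<subseteq> {x. even x \<and> 2 \<le> x \<and> x \<le> 2 * N}" unfolding ev_def by auto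
    show "{x. even x \<and> 2 \<le> x \<and> x \<le> 2 * N} \<subseteq> set ev"
    proof
      fix x assume x: "x \<in> {x. even x \<and> 2 \<le> x \<and> x \<le> 2 * N}"
      then obtain k where k: "x = 2 * k" by (auto elim: evenE)
      then have "x = 2 * (k - 1) + 2" "k - 1 < N" using x by auto
      then show "x \<in> set ev" unfolding ev_def by (simp add: image_iff)
    qed
  qed
  have sod: "set od = {x. odd x \<and> x \<le> 2 * N}"
  proof
    show "set od \<subseteq> {x. odd x \<and> x \<le> 2 * N}" unfolding od_def by auto
    show "{x. odd x \<and> x \<le> 2 * N} \<subseteq> set od"
    proof
      fix x assume x: "x \<in> {x. odd x \<and> x \<le> 2 * N}"
      then obtain k where k: "x = 2 * k + 1" by (auto elim: oddE)
      then have "k < N" using x by auto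
      then show "x \<in> set od" unfolding od_def k by (simp add: image_iff)
    qed
  qed
  have dev: "distinct ev" "distinct od" unfolding ev_def od_def by (auto simp: distinct_map inj_on_def)
  have len: "length p = 2 * N" unfolding p_def ev_def od_def by simp
  have perm: "is_perm p"
  proof -
    have e: "{1..2 * N} = {x. even x \<and> 2 \<le> x \<and> x \<le> 2 * N} \<union> {x. odd x \<and> x \<le> 2 * N}"
      by (auto; presburger)
    have "set p = {1..2 * N}" unfolding p_def e kseq_set set_append sev sod ..
    moreover have "set ev \<inter> set od = {}" unfolding sev sod by auto
    moreover have "distinct p" unfolding p_def using dev calculation(2) by simp
    ultimately show ?thesis unfolding is_perm_def len by simp
  qed
  have "p \<in> juxtaposition c1 c2" unfolding juxtaposition_def
  proof (intro CollectI conjI exI[of _ N])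
    show "is_perm p" by (rule perm)
    show "N \<le> length p" using len by simp
    have "take N p = kseq c1 ev" "drop N p = kseq c2 od" unfolding p_def ev_def by auto
    moreover have "sorted_wrt (<) ev" "sorted_wrt (<) od" unfolding ev_def od_def
      by (auto simp: sorted_wrt_map sorted_wrt_upt intro: sorted_wrt_mono_rel[OF _ sorted_wrt_upt])
    ultimately show "mono_seq c1 (take N p)" "mono_seq c2 (drop N p)" by (auto intro: kseq_mono)
  qed
  moreover have "horizontal_alternation p" unfolding horizontal_alternation_def
  proof
    assume "\<exists>i j. i < j \<and> j < length p \<and> odd (p ! i) \<and> even (p ! j)"
    then obtain i j where ij: "i < j" "j < length p" "odd (p ! i)" "even (p ! j)" by blast
    have lk: "length (kseq c1 ev) = N" unfolding ev_def by simp
    show False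
    proof (cases "i < N")
      case True
      then have "p ! i = kseq c1 ev ! i" unfolding p_def using lk by (simp add: nth_append)
      then have "p ! i \<in> set ev" using True lk by (metis kseq_set nth_mem)
      then show False using ij sev by auto
    next
      case False
      have lo: "length (kseq c2 od) = N" unfolding od_def by simp
      have "p ! j = kseq c2 od ! (j - N)" "j - N < N" unfolding p_def using lk ij len False lo
        by (auto simp: nth_append)
      then have "p ! j \<in> set od" using lo by (metis kseq_set nth_mem)
      then show False using ij sod by auto
    qed
  qed
  moreover note pj = calculation(1)
  have "p \<in> C" using assms pj by blast
  ultimately show ?thesis using len by (intro bexI[of _ p]) auto
qed


lemma even_before_odd:
  assumes alt: "horizontal_alternation p" and ij: "i < length p" "j < length p" "even (p ! i)" "odd (p ! j)"
  shows "i < j"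
proof -
  have "i \<noteq> j" using ij by auto
  moreover have "\<not> j < i" using alt ij unfolding horizontal_alternation_def by blast
  ultimately show ?thesis by simp
qed

lemma b_to_good:
  assumes C: "perm_class C" and b: "\<forall>N. \<exists>p\<in>C. horizontal_alternation p \<and> length p \<ge> N"
  shows "\<exists>c1 c2. \<forall>q\<in>juxtaposition c1 c2. length q \<le> m \<longrightarrow> q \<in> C"
proof -
  obtain p where p: "p \<in> C" "horizontal_alternation p" "2 * 4^(4^m) \<le> length p" using b by blast
  have pp: "is_perm p" using p C unfolding perm_class_def by blast
  define h where "h = length p div 2"
  define S where "S = {1..h}"
  define L where "L v = pos p (2 * v)" for v
  define R where "R v = pos p (2 * v - 1)" for v
  have finS: "finite S" unfolding S_def by simp
  have cardS: "4^(4^m) \<le> card S" unfolding S_def h_def using p(3) by simp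
  have Sv: "v \<in> S \<Longrightarrow> 1 \<le> v \<and> 2 * v \<le> length p" for v unfolding S_def h_def by auto
  have Lp: "v \<in> S \<Longrightarrow> L v < length p \<and> p ! L v = 2 * v" for v
  proof -
    assume v: "v \<in> S"
    have "1 \<le> 2 * v" "2 * v \<le> length p" using Sv[OF v] by auto
    then show ?thesis using pos[OF pp, of "2 * v"] unfolding L_def by blast
  qed
  have Rp: "v \<in> S \<Longrightarrow> R v < length p \<and> p ! R v = 2 * v - 1" for v
  proof -
    assume v: "v \<in> S"
    have "1 \<le> 2 * v - 1" "2 * v - 1 \<le> length p" using Sv[OF v] by auto
    then show ?thesis using pos[OF pp, of "2 * v - 1"] unfolding R_def by blast
  qed
  have injL: "inj_on L S" unfolding inj_on_def
  proof (intro ballI impI)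
    fix x y assume "x \<in> S" "y \<in> S" "L x = L y"
    then have "2 * x = 2 * y" using Lp by metis
    then show "x = y" by simp
  qed
  have injR: "inj_on R S" unfolding inj_on_def
  proof (intro ballI impI)
    fix x y assume xy: "x \<in> S" "y \<in> S" "R x = R y"
    then have "2 * x - 1 = 2 * y - 1" using Rp by metis
    then show "x = y" using Sv xy(1,2) by auto
  qed
  have len: "\<forall>s\<in>S. L s < length p \<and> R s < length p" using Lp Rp by blast
  have LR: "\<forall>s\<in>S. \<forall>s'\<in>S. L s < R s'"
  proof (intro ballI)
    fix s s' assume ss: "s \<in> S" "s' \<in> S"
    have "odd (2 * s' - 1)" using Sv[OF ss(2)] by presburger
    then show "L s < R s'" using even_before_odd[OF p(2), of "L s" "R s'"] Lp[OF ss(1)] Rp[OF ss(2)] by simp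
  qed
  have ord: "\<forall>s\<in>S. \<forall>s'\<in>S. s < s' \<longrightarrow>
      (\<forall>x y. p ! (if x then L s else R s) < p ! (if y then L s' else R s'))"
  proof (intro ballI impI allI)
    fix s s' x y assume ss: "s \<in> S" "s' \<in> S" "s < s'"
    show "p ! (if x then L s else R s) < p ! (if y then L s' else R s')"
      using Lp[OF ss(1)] Lp[OF ss(2)] Rp[OF ss(1)] Rp[OF ss(2)] ss(3) Sv[OF ss(1)]
      by (cases x; cases y) auto
  qed
  obtain c1 c2 where cc: "\<forall>q\<in>juxtaposition c1 c2. length q \<le> m \<longrightarrow> contains p q"
    using struct_juxt[OF finS cardS injL injR len LR ord] by blast
  have "\<forall>q\<in>juxtaposition c1 c2. length q \<le> m \<longrightarrow> q \<in> C"
    using cc class_closed[OF C p(1)] unfolding juxtaposition_def by blast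
  then show ?thesis by blast
qed

lemma b_to_a:
  assumes C: "perm_class C" and b: "\<forall>N. \<exists>p\<in>C. horizontal_alternation p \<and> length p \<ge> N"
  shows "unbounded_hpw C"
  unfolding unbounded_hpw_def
proof
  fix k
  obtain p where p: "p \<in> C" "horizontal_alternation p" "2 * k + 2 \<le> length p" using b by blast
  have pp: "is_perm p" using p C unfolding perm_class_def by blast
  define n where "n = length p"
  define h where "h = n div 2"
  have hk: "k + 1 \<le> h" using p(3) unfolding h_def n_def by simp
  have ex: "\<exists>j. j < n \<and> odd (p ! j)"
    using pos[OF pp, of 1] p(3) unfolding n_def by (intro exI[of _ "pos p 1"]) auto
  define i where "i = (LEAST j. j < n \<and> odd (p ! j))"
  have i: "i < n" "odd (p ! i)" using LeastI_ex[OF ex] unfolding i_def by auto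
  have bef: "j < i \<Longrightarrow> even (p ! j)" for j using not_less_Least[of j "\<lambda>j. j < n \<and> odd (p ! j)"] i
    unfolding i_def by auto
  define V where "V = set (take i p)"
  have Veven: "x \<in> V \<Longrightarrow> even x" for x
  proof -
    assume "x \<in> V"
    then obtain j where "j < i" "x = p ! j" unfolding V_def using i n_def by (auto simp: in_set_conv_nth)
    then show "even x" using bef by simp
  qed
  have inV: "v \<in> {1..h} \<Longrightarrow> 2 * v \<in> V" for v
  proof -
    assume v: "v \<in> {1..h}"
    have q: "pos p (2 * v) < n" "p ! pos p (2 * v) = 2 * v"
      using pos[OF pp, of "2 * v"] v unfolding h_def n_def by auto
    have "pos p (2 * v) < i"
    proof (rule ccontr)
      assume "\<not> pos p (2 * v) < i"
      then have "i \<le> pos p (2 * v)" by simp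
      moreover have "i \<noteq> pos p (2 * v)" using i q by auto
      ultimately have "i < pos p (2 * v)" by simp
      moreover have "even (p ! pos p (2 * v))" using q by simp
      ultimately show False using p(2) i q unfolding horizontal_alternation_def n_def by blast
    qed
    then have "take i p ! pos p (2 * v) = 2 * v" "pos p (2 * v) < length (take i p)" using q i n_def by auto
    then show "2 * v \<in> V" unfolding V_def by (metis nth_mem)
  qed
  have finV: "finite V" unfolding V_def by simp
  have "(\<lambda>v. 2 * v) ` {1..h} \<subseteq> V" using inV by auto
  then have "card ((\<lambda>v. 2 * v) ` {1..h}) \<le> card V" using finV card_mono by blast
  moreover have "card ((\<lambda>v. 2 * v) ` {1..h}) = h" by (subst card_image) (auto simp: inj_on_def)
  ultimately have hV: "h \<le> card V" by simp
  have nc: "\<forall>v\<in>V. Suc v \<notin> V" using Veven by (metis even_Suc)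
  have "1 \<le> i"
  proof (rule ccontr)
    assume "\<not> 1 \<le> i"
    then have "V = {}" unfolding V_def by simp
    then show False using inV[of 1] hk by auto
  qed
  then have gc: "grid_complexity (prefix_points p i) \<le> hpw p" using hpw_ge i n_def by simp
  have "intervalicity V \<le> grid_complexity (prefix_points p i)"
    unfolding grid_complexity_def using snd_prefix[of i p] i n_def V_def by simp
  moreover have "card V \<le> intervalicity V" using intervalicity_ge[OF finV nc] .
  ultimately have "k < hpw p" using gc hV hk by linarith
  then show "\<exists>p\<in>C. k < hpw p" using p(1) by blast
qed

theorem mainTheorem9:
  assumes "perm_class C"
  shows "(unbounded_hpw C \<longleftrightarrow>
            (\<forall>N. \<exists>p \<in> C. horizontal_alternation p \<and> length p \<ge> N))
       \<and> ((\<forall>N. \<exists>p \<in> C. horizontal_alternation p \<and> length p \<ge> N) \<longleftrightarrow>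
            (\<exists>c1 c2. juxtaposition c1 c2 \<subseteq> C))"
proof -
  have bc: "(\<forall>N. \<exists>p \<in> C. horizontal_alternation p \<and> length p \<ge> N) \<longleftrightarrow> (\<exists>c1 c2. juxtaposition c1 c2 \<subseteq> C)"
  proof
    assume "\<forall>N. \<exists>p \<in> C. horizontal_alternation p \<and> length p \<ge> N"
    then show "\<exists>c1 c2. juxtaposition c1 c2 \<subseteq> C" using pigeon b_to_good[OF assms] by blast
  next
    assume "\<exists>c1 c2. juxtaposition c1 c2 \<subseteq> C"
    then show "\<forall>N. \<exists>p \<in> C. horizontal_alternation p \<and> length p \<ge> N" using c_to_b by blast
  qed
  have ab: "unbounded_hpw C \<longleftrightarrow> (\<forall>N. \<exists>p \<in> C. horizontal_alternation p \<and> length p \<ge> N)"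
  proof
    assume "unbounded_hpw C"
    then have "\<exists>c1 c2. juxtaposition c1 c2 \<subseteq> C" using pigeon a_to_good[OF assms] by blast
    then show "\<forall>N. \<exists>p \<in> C. horizontal_alternation p \<and> length p \<ge> N" using bc by blast
  next
    assume "\<forall>N. \<exists>p \<in> C. horizontal_alternation p \<and> length p \<ge> N"
    then show "unbounded_hpw C" using b_to_a[OF assms] by blast
  qed
  show ?thesis using ab bc by blast
qed


end
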